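(* Let $\theta_0>0$, let $F$ be a probability measure on $(0,\infty)$, let $A_0,A_1,\dots,A_N$ be a measurable partition of $(0,\infty)$ with $m_j:=\inf A_j>0$ for $1\le j\le N$, and let $F_N=\sum_{j=1}^N w_j\delta_{z_j}$ be a probability measure with $z_j\in A_j$ for $j=1,\dots,N$. Then \[ \|p_{\theta_0,F}-p_{\theta_0,F_N}\|_1\le 4\max_{1\le j\le N}\frac{\operatorname{diam}A_j}{m_j}+\sum_{j=1}^N|F(A_j)-w_j|+F(A_0). \]
   Context: For $\theta>0$ and a probability measure $F$ on $(0,\infty)$, $p_{\theta,F}(x,y)=\int z^2\theta e^{-z(x+\theta y)}\,dF(z)$ for $(x,y)\in(0,\infty)^2$. $\|\cdot\|_1$ is the $L^1$ norm with respect to Lebesgue measure on $(0,\infty)^2$. *)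

theory Defs
  imports "HOL-Probability.Probability"
begin

definition pmix :: "real \<Rightarrow> real measure \<Rightarrow> real \<Rightarrow> real \<Rightarrow> real" where
  "pmix \<theta> F x y = (\<integral>z. z\<^sup>2 * \<theta> * exp (- z * (x + \<theta> * y)) \<partial>F)"

definition discrete_mix :: "nat \<Rightarrow> (nat \<Rightarrow> real) \<Rightarrow> (nat \<Rightarrow> real) \<Rightarrow> real measure" where
  "discrete_mix N w z =
     density (count_space UNIV) (\<lambda>t. ennreal (\<Sum>j\<in>{1..N}. if z j = t then w j else 0))"

definition diam_ext :: "real set \<Rightarrow> ennreal" where
  "diam_ext S = (SUP x\<in>S. SUP y\<in>S. ennreal \<bar>x - y\<bar>)"

definition L1_dist :: "(real \<Rightarrow> real \<Rightarrow> real) \<Rightarrow> (real \<Rightarrow> real \<Rightarrow> real) \<Rightarrow> ennreal" where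
  "L1_dist f g = (\<integral>\<^sup>+ q. indicator ({0<..} \<times> {0<..}) q
                    * ennreal \<bar>f (fst q) (snd q) - g (fst q) (snd q)\<bar> \<partial>(lborel :: (real \<times> real) measure))"

end

theory Submission
  imports Defs
begin


lemma exp_int0:
  fixes c :: real assumes c: "c > 0"
  shows "(\<integral>\<^sup>+x. ennreal (indicator {0..} x * exp (-c*x)) \<partial>lborel) = ennreal (1/c)"
proof -
  have "((\<lambda>x::real. exp (-c*x)) has_integral exp (-c*0)/c) {0..}"
    by (rule has_integral_exp_minus_to_infinity[OF c])
  moreover have "(\<lambda>x::real. indicator {0..} x * exp (-c*x)) = (\<lambda>x. if x \<in> {0..} then exp (-c*x) else 0)"
    by (auto simp: indicator_def fun_eq_iff)
  ultimately have "((\<lambda>x::real. indicator {0..} x * exp (-c*x)) has_integral 1/c) UNIV"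
    using has_integral_restrict_UNIV[of "{0..}" "\<lambda>x::real. exp (-c*x)" "1/c"]
    by simp
  thus ?thesis
    by (intro nn_integral_has_integral_lborel) auto
qed

lemma ae_pos_cong:
  fixes f :: "real \<Rightarrow> real"
  shows "(\<integral>\<^sup>+x. indicator {0<..} x * ennreal (f x) \<partial>lborel)
     = (\<integral>\<^sup>+x. ennreal (indicator {0..} x * (f x::real)) \<partial>lborel)"
    apply (rule nn_integral_cong_AE)
    using AE_lborel_singleton[of 0]
    by eventually_elim (simp add: indicator_def less_le)

lemma exp_int:
  fixes c :: real assumes c: "c > 0"
  shows "(\<integral>\<^sup>+x. indicator {0<..} x * ennreal (exp (-c*x)) \<partial>lborel) = ennreal (1/c)"
  using exp_int0[OF c] ae_pos_cong[of "\<lambda>x. exp (-c*x)"] by simp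

lemma exp_diff_int_le:
  fixes a b :: real assumes a: "a > 0" and ab: "a \<le> b"
  shows "(\<integral>\<^sup>+x. indicator {0<..} x * ennreal \<bar>exp (-a*x) - exp (-b*x)\<bar> \<partial>lborel) = ennreal (1/a - 1/b)"
proof -
  have b: "b > 0" using a ab by linarith
  have "((\<lambda>x::real. exp (-a*x) - exp (-b*x)) has_integral (exp (-a*0)/a - exp (-b*0)/b)) {0..}"
    by (intro has_integral_diff has_integral_exp_minus_to_infinity a b)
  moreover have "(\<lambda>x::real. indicator {0..} x * (exp (-a*x) - exp (-b*x))) = (\<lambda>x. if x \<in> {0..} then (exp (-a*x) - exp (-b*x)) else 0)"
    by (auto simp: indicator_def fun_eq_iff)
  ultimately have I: "((\<lambda>x::real. indicator {0..} x * (exp (-a*x) - exp (-b*x))) has_integral (1/a - 1/b)) UNIV"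
    using has_integral_restrict_UNIV[of "{0..}" "\<lambda>x::real. exp (-a*x) - exp (-b*x)" "1/a - 1/b"]
    by simp
  have nn: "\<And>x::real. 0 \<le> indicator {0..} x * (exp (-a*x) - exp (-b*x))"
    using ab by (auto simp: indicator_def intro!: mult_right_mono)
  have "(\<integral>\<^sup>+x. ennreal (indicator {0..} x * (exp (-a*x) - exp (-b*x))) \<partial>lborel) = ennreal (1/a - 1/b)"
    by (rule nn_integral_has_integral_lborel[OF _ nn I]) auto
  moreover have "(\<integral>\<^sup>+x. indicator {0<..} x * ennreal \<bar>exp (-a*x) - exp (-b*x)\<bar> \<partial>lborel)
     = (\<integral>\<^sup>+x. ennreal (indicator {0..} x * (exp (-a*x) - exp (-b*x))) \<partial>lborel)"
    apply (rule nn_integral_cong_AE)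
    using AE_lborel_singleton[of 0]
    apply eventually_elim using ab by (auto simp: indicator_def intro!: mult_right_mono)
  ultimately show ?thesis by simp
qed

lemma exp_abs_diff_int:
  fixes a b :: real assumes a: "a > 0" and b: "b > 0"
  shows "(\<integral>\<^sup>+x. indicator {0<..} x * ennreal \<bar>exp (-a*x) - exp (-b*x)\<bar> \<partial>lborel) = ennreal \<bar>1/a - 1/b\<bar>"
proof (cases "a \<le> b")
  case True
  then show ?thesis using exp_diff_int_le[OF a True] a by (simp add: frac_le)
next
  case False
  then have "b \<le> a" by simp
  moreover have "\<bar>1/a - 1/b\<bar> = 1/b - 1/a" using a b \<open>b \<le> a\<close> by (simp add: frac_le)
  moreover have "\<And>x. \<bar>exp (-a*x) - exp (-b*x)\<bar> = \<bar>exp (-b*x) - exp (-a*x)\<bar>" by (rule abs_minus_commute)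
  ultimately show ?thesis using exp_diff_int_le[OF b \<open>b \<le> a\<close>] by simp
qed

lemma dens_diff_int:
  fixes a b :: real assumes a: "a > 0" and b: "b > 0"
  shows "(\<integral>\<^sup>+x. indicator {0<..} x * ennreal \<bar>a * exp (-a*x) - b * exp (-b*x)\<bar> \<partial>lborel) \<le> ennreal (2*\<bar>a - b\<bar>/a)"
proof -
  have "(\<integral>\<^sup>+x. indicator {0<..} x * ennreal \<bar>a * exp (-a*x) - b * exp (-b*x)\<bar> \<partial>lborel)
    \<le> (\<integral>\<^sup>+x. ennreal \<bar>a - b\<bar> * (indicator {0<..} x * ennreal (exp (-a*x)))
          + ennreal b * (indicator {0<..} x * ennreal \<bar>exp (-a*x) - exp (-b*x)\<bar>) \<partial>lborel)"
  proof (rule nn_integral_mono)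
    fix x :: real
    have "\<bar>a * exp (-a*x) - b * exp (-b*x)\<bar> \<le> \<bar>a - b\<bar> * exp (-a*x) + b * \<bar>exp (-a*x) - exp (-b*x)\<bar>"
    proof -
      have "a * exp (-a*x) - b * exp (-b*x) = (a - b) * exp (-a*x) + b * (exp (-a*x) - exp (-b*x))"
        by (simp add: algebra_simps)
      also have "\<bar>\<dots>\<bar> \<le> \<bar>(a - b) * exp (-a*x)\<bar> + \<bar>b * (exp (-a*x) - exp (-b*x))\<bar>" by (rule abs_triangle_ineq)
      also have "\<dots> = \<bar>a - b\<bar> * exp (-a*x) + b * \<bar>exp (-a*x) - exp (-b*x)\<bar>"
        using b by (simp add: abs_mult)
      finally show ?thesis .
    qed
    then show "indicator {0<..} x * ennreal \<bar>a * exp (-a*x) - b * exp (-b*x)\<bar>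
      \<le> ennreal \<bar>a - b\<bar> * (indicator {0<..} x * ennreal (exp (-a*x)))
          + ennreal b * (indicator {0<..} x * ennreal \<bar>exp (-a*x) - exp (-b*x)\<bar>)"
      using b by (auto simp: indicator_def ennreal_mult'[symmetric] ennreal_plus[symmetric] simp del: ennreal_plus intro!: ennreal_leI)
  qed
  also have "\<dots> = ennreal \<bar>a - b\<bar> * ennreal (1/a) + ennreal b * ennreal \<bar>1/a - 1/b\<bar>"
    using exp_int[OF a] exp_abs_diff_int[OF a b] by (subst nn_integral_add) (auto simp: nn_integral_cmult)
  also have "\<dots> = ennreal (2*\<bar>a - b\<bar>/a)"
  proof -
    have "b * \<bar>1/a - 1/b\<bar> = \<bar>a - b\<bar>/a"
      using a b by (simp add: field_simps abs_div_pos abs_if)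
      
    then show ?thesis using a b
      by (simp add: ennreal_mult'[symmetric] ennreal_plus[symmetric] del: ennreal_plus)
  qed
  finally show ?thesis .
qed

lemma prod_int:
  fixes G H :: "real \<Rightarrow> ennreal"
  assumes [measurable]: "G \<in> borel_measurable borel" "H \<in> borel_measurable borel"
  shows "(\<integral>\<^sup>+q. G (fst q) * H (snd q) \<partial>(lborel::(real\<times>real) measure))
     = (\<integral>\<^sup>+x. G x \<partial>lborel) * (\<integral>\<^sup>+y. H y \<partial>lborel)"
proof -
  have "(\<integral>\<^sup>+q. G (fst q) * H (snd q) \<partial>(lborel::(real\<times>real) measure))
      = (\<integral>\<^sup>+q. G (fst q) * H (snd q) \<partial>(lborel \<Otimes>\<^sub>M lborel))"
    by (simp only: lborel_prod)
  also have "\<dots> = (\<integral>\<^sup>+x. \<integral>\<^sup>+y. G x * H y \<partial>lborel \<partial>lborel)"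
    by (subst lborel.nn_integral_fst[symmetric]) auto
  also have "\<dots> = (\<integral>\<^sup>+x. G x * (\<integral>\<^sup>+y. H y \<partial>lborel) \<partial>lborel)"
    by (simp add: nn_integral_cmult)
  also have "\<dots> = (\<integral>\<^sup>+x. G x \<partial>lborel) * (\<integral>\<^sup>+y. H y \<partial>lborel)"
    by (simp add: nn_integral_multc)
  finally show ?thesis .
qed

lemma prod_meas:
  fixes G H :: "real \<Rightarrow> ennreal"
  assumes [measurable]: "G \<in> borel_measurable borel" "H \<in> borel_measurable borel"
  shows "(\<lambda>q. G (fst q) * H (snd q)) \<in> borel_measurable (lborel::(real\<times>real) measure)"
  unfolding lborel_prod[symmetric] by measurable

lemma dens_int:
  fixes c :: real assumes c: "c > 0"
  shows "(\<integral>\<^sup>+x. indicator {0<..} x * ennreal (c * exp (-c*x)) \<partial>lborel) = 1"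
proof -
  have "(\<integral>\<^sup>+x. indicator {0<..} x * ennreal (c * exp (-c*x)) \<partial>lborel)
     = (\<integral>\<^sup>+x. ennreal c * (indicator {0<..} x * ennreal (exp (-c*x))) \<partial>lborel)"
    using c by (intro nn_integral_cong) (simp add: ennreal_mult' mult_ac)
  also have "\<dots> = ennreal c * ennreal (1/c)"
    using exp_int[OF c] by (simp add: nn_integral_cmult)
  also have "\<dots> = 1" using c by (simp add: ennreal_mult'[symmetric])
  finally show ?thesis .
qed

definition fz :: "real \<Rightarrow> real \<Rightarrow> real \<Rightarrow> real \<Rightarrow> real" where
  "fz \<theta> z x y = z\<^sup>2 * \<theta> * exp (- z * (x + \<theta> * y))"

lemma fz_split: "fz \<theta> z x y = (z * exp (-z*x)) * ((\<theta>*z) * exp (-(\<theta>*z)*y))"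
  by (simp add: fz_def power2_eq_square exp_add[symmetric] algebra_simps)

lemma fz_int:
  assumes th: "\<theta> > 0" and z: "z > 0"
  shows "(\<integral>\<^sup>+q. indicator ({0<..} \<times> {0<..}) q * ennreal (fz \<theta> z (fst q) (snd q)) \<partial>(lborel::(real\<times>real) measure)) = 1"
proof -
  have tz: "\<theta>*z > 0" using th z by simp
  have "(\<integral>\<^sup>+q. indicator ({0<..} \<times> {0<..}) q * ennreal (fz \<theta> z (fst q) (snd q)) \<partial>(lborel::(real\<times>real) measure))
    = (\<integral>\<^sup>+q. (indicator {0<..} (fst q) * ennreal (z * exp (-z* fst q)))
           * (indicator {0<..} (snd q) * ennreal ((\<theta>*z) * exp (-(\<theta>*z)* snd q))) \<partial>(lborel::(real\<times>real) measure))"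
    using z tz by (intro nn_integral_cong) (auto simp: fz_split indicator_def ennreal_mult'[symmetric] mem_Times_iff)
  also have "\<dots> = 1"
    using dens_int[OF z] dens_int[OF tz] by (subst prod_int) auto
  finally show ?thesis .
qed

lemma fz_diff_int:
  assumes th: "\<theta> > 0" and z: "z > 0" and z': "z' > 0"
  shows "(\<integral>\<^sup>+q. indicator ({0<..} \<times> {0<..}) q * ennreal \<bar>fz \<theta> z (fst q) (snd q) - fz \<theta> z' (fst q) (snd q)\<bar> \<partial>(lborel::(real\<times>real) measure))
     \<le> ennreal (4 * \<bar>z - z'\<bar> / z)"
proof -
  have tz: "\<theta>*z > 0" using th z by simp
  have tz': "\<theta>*z' > 0" using th z' by simp
  define E where "E = (\<lambda>l x::real. l * exp (-l*x))"
  have Enn: "\<And>l x. l > 0 \<Longrightarrow> E l x \<ge> 0" by (simp add: E_def)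
  have "(\<integral>\<^sup>+q. indicator ({0<..} \<times> {0<..}) q * ennreal \<bar>fz \<theta> z (fst q) (snd q) - fz \<theta> z' (fst q) (snd q)\<bar> \<partial>(lborel::(real\<times>real) measure))
    \<le> (\<integral>\<^sup>+q. (indicator {0<..} (fst q) * ennreal \<bar>E z (fst q) - E z' (fst q)\<bar>) * (indicator {0<..} (snd q) * ennreal (E (\<theta>*z) (snd q)))
         + (indicator {0<..} (fst q) * ennreal (E z' (fst q))) * (indicator {0<..} (snd q) * ennreal \<bar>E (\<theta>*z) (snd q) - E (\<theta>*z') (snd q)\<bar>) \<partial>(lborel::(real\<times>real) measure))"
  proof (rule nn_integral_mono)
    fix q :: "real \<times> real"
    obtain x y where q: "q = (x, y)" by (cases q)
    have "\<bar>fz \<theta> z x y - fz \<theta> z' x y\<bar> \<le> \<bar>E z x - E z' x\<bar> * E (\<theta>*z) y + E z' x * \<bar>E (\<theta>*z) y - E (\<theta>*z') y\<bar>"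
    proof -
      have "fz \<theta> z x y - fz \<theta> z' x y = (E z x - E z' x) * E (\<theta>*z) y + E z' x * (E (\<theta>*z) y - E (\<theta>*z') y)"
        by (simp add: fz_split E_def algebra_simps)
      also have "\<bar>\<dots>\<bar> \<le> \<bar>(E z x - E z' x) * E (\<theta>*z) y\<bar> + \<bar>E z' x * (E (\<theta>*z) y - E (\<theta>*z') y)\<bar>"
        by (rule abs_triangle_ineq)
      also have "\<dots> = \<bar>E z x - E z' x\<bar> * E (\<theta>*z) y + E z' x * \<bar>E (\<theta>*z) y - E (\<theta>*z') y\<bar>"
        using Enn[OF tz, of y] Enn[OF z', of x] by (simp add: abs_mult)
      finally show ?thesis .
    qed
    then show "indicator ({0<..} \<times> {0<..}) q * ennreal \<bar>fz \<theta> z (fst q) (snd q) - fz \<theta> z' (fst q) (snd q)\<bar>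
      \<le> (indicator {0<..} (fst q) * ennreal \<bar>E z (fst q) - E z' (fst q)\<bar>) * (indicator {0<..} (snd q) * ennreal (E (\<theta>*z) (snd q)))
         + (indicator {0<..} (fst q) * ennreal (E z' (fst q))) * (indicator {0<..} (snd q) * ennreal \<bar>E (\<theta>*z) (snd q) - E (\<theta>*z') (snd q)\<bar>)"
      using Enn[OF tz, of y] Enn[OF z', of x] unfolding q
      by (auto simp: indicator_def mem_Times_iff ennreal_mult'[symmetric] ennreal_plus[symmetric] simp del: ennreal_plus intro!: ennreal_leI)
  qed
  also have "\<dots> = (\<integral>\<^sup>+x. indicator {0<..} x * ennreal \<bar>E z x - E z' x\<bar> \<partial>lborel) * (\<integral>\<^sup>+y. indicator {0<..} y * ennreal (E (\<theta>*z) y) \<partial>lborel)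
     + (\<integral>\<^sup>+x. indicator {0<..} x * ennreal (E z' x) \<partial>lborel) * (\<integral>\<^sup>+y. indicator {0<..} y * ennreal \<bar>E (\<theta>*z) y - E (\<theta>*z') y\<bar> \<partial>lborel)"
  proof -
    let ?G1 = "\<lambda>x. indicator {0<..} x * ennreal \<bar>E z x - E z' x\<bar>"
    let ?H1 = "\<lambda>y. indicator {0<..} y * ennreal (E (\<theta>*z) y)"
    let ?G2 = "\<lambda>x. indicator {0<..} x * ennreal (E z' x)"
    let ?H2 = "\<lambda>y. indicator {0<..} y * ennreal \<bar>E (\<theta>*z) y - E (\<theta>*z') y\<bar>"
    have m: "?G1 \<in> borel_measurable borel" "?H1 \<in> borel_measurable borel"
         "?G2 \<in> borel_measurable borel" "?H2 \<in> borel_measurable borel"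
      unfolding E_def by measurable
    show ?thesis
      using prod_int[OF m(1,2)] prod_int[OF m(3,4)] prod_meas[OF m(1,2)] prod_meas[OF m(3,4)]
      by (subst nn_integral_add) auto
  qed
  also have "\<dots> = (\<integral>\<^sup>+x. indicator {0<..} x * ennreal \<bar>E z x - E z' x\<bar> \<partial>lborel)
     + (\<integral>\<^sup>+y. indicator {0<..} y * ennreal \<bar>E (\<theta>*z) y - E (\<theta>*z') y\<bar> \<partial>lborel)"
    using dens_int[OF tz] dens_int[OF z'] by (simp add: E_def)
  also have "\<dots> \<le> ennreal (2*\<bar>z - z'\<bar>/z) + ennreal (2*\<bar>\<theta>*z - \<theta>*z'\<bar>/(\<theta>*z))"
    unfolding E_def by (intro add_mono dens_diff_int z z' tz tz')
  also have "\<dots> = ennreal (4 * \<bar>z - z'\<bar> / z)"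
  proof -
    have "2*\<bar>\<theta>*z - \<theta>*z'\<bar>/(\<theta>*z) = 2*\<bar>z - z'\<bar>/z"
      using th z by (simp add: right_diff_distrib[symmetric] abs_mult)
    then show ?thesis using z by (simp add: ennreal_plus[symmetric] del: ennreal_plus)
  qed
  finally show ?thesis .
qed



lemma pointwise:
  fixes F :: "real measure" and \<phi> :: "real \<Rightarrow> real" and A :: "nat \<Rightarrow> real set"
    and w c :: "nat \<Rightarrow> real" and N :: nat and B :: real
  assumes F_prob: "prob_space F" and F_sets: "sets F = sets borel"
    and F_pos: "measure F {0<..} = 1"
    and A_meas: "\<And>j. j \<le> N \<Longrightarrow> A j \<in> sets borel"
    and A_disj: "disjoint_family_on A {0..N}"
    and A_cover: "(\<Union>j\<in>{0..N}. A j) = {0<..}"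
    and phi_meas: "\<phi> \<in> borel_measurable borel"
    and phi_nn: "\<And>t. \<phi> t \<ge> 0"
    and phi_bd: "\<And>t. t > 0 \<Longrightarrow> \<phi> t \<le> B"
    and c_nn: "\<And>j. c j \<ge> 0"
  defines "\<Phi> \<equiv> (\<lambda>t. indicator (A 0) t * \<phi> t + (\<Sum>j\<in>{1..N}. indicator (A j) t * \<bar>\<phi> t - c j\<bar>))"
  shows "integrable F \<Phi>"
    and "\<bar>(\<integral>t. \<phi> t \<partial>F) - (\<Sum>j\<in>{1..N}. w j * c j)\<bar>
         \<le> (\<integral>t. \<Phi> t \<partial>F) + (\<Sum>j\<in>{1..N}. \<bar>measure F (A j) - w j\<bar> * c j)"
proof -
  interpret prob_space F by (rule F_prob)
  have meq: "(borel_measurable F :: (real \<Rightarrow> real) set) = borel_measurable borel"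
    by (rule measurable_cong_sets[OF F_sets refl])
  have AEpos: "AE t in F. t \<in> {0<..}"
    using F_pos by (intro AE_prob_1) simp
  have Ameas[measurable]: "\<And>j. j \<in> {0..N} \<Longrightarrow> A j \<in> sets borel" using A_meas by auto
  have phim[measurable]: "\<phi> \<in> borel_measurable F" using phi_meas meq by simp
  have int_ind: "integrable F (\<lambda>t. indicator S t * g t)"
    if S: "S \<in> sets borel" and g: "(g :: real \<Rightarrow> real) \<in> borel_measurable borel" and gb: "\<And>t. t > 0 \<Longrightarrow> \<bar>g t\<bar> \<le> C"
    for S g and C :: real
  proof (rule integrable_const_bound[where B=C])
    show "AE t in F. norm (indicator S t * g t) \<le> C"
      using AEpos
    proof eventually_elim
      case (elim t)
      then have "\<bar>g t\<bar> \<le> C" using gb by simp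
      then show ?case using abs_ge_zero[of "g t"] by (auto simp: indicator_def abs_mult)
    qed
    show "(\<lambda>t. indicator S t * g t) \<in> borel_measurable F"
      using S g meq by simp
  qed
  have bdphi: "\<And>t. t > 0 \<Longrightarrow> \<bar>\<phi> t\<bar> \<le> B" using phi_bd phi_nn by simp
  have bdphic': "\<bar>\<phi> t - c j\<bar> \<le> B + c j" if "t > 0" for t j
    using phi_bd[OF that] phi_nn[of t] c_nn[of j] by (simp add: abs_le_iff)
  have bdphic: "\<bar>\<bar>\<phi> t - c j\<bar>\<bar> \<le> B + c j" if "t > 0" for t j
    using bdphic'[OF that] by simp
  have gm1: "(\<lambda>t. \<bar>\<phi> t - c j\<bar>) \<in> borel_measurable borel" for j
    using phi_meas by measurable
  have gm2: "(\<lambda>t. \<phi> t - c j) \<in> borel_measurable borel" for j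
    using phi_meas by measurable
  have i0: "integrable F (\<lambda>t. indicator (A j) t * \<phi> t)" if "j \<le> N" for j
    using that by (intro int_ind[OF _ phi_meas bdphi]) (auto intro: A_meas)
  have i1: "integrable F (\<lambda>t. indicator (A j) t * \<bar>\<phi> t - c j\<bar>)" if "j \<le> N" for j
    using that by (intro int_ind[OF _ gm1 bdphic]) (auto intro: A_meas)
  have i2: "integrable F (\<lambda>t. indicator (A j) t * (\<phi> t - c j))" if "j \<le> N" for j
    using that by (intro int_ind[OF _ gm2 bdphic']) (auto intro: A_meas)
  show intPhi: "integrable F \<Phi>"
    unfolding \<Phi>_def
    apply (rule Bochner_Integration.integrable_add)
     apply (rule i0, simp)
    apply (rule Bochner_Integration.integrable_sum)
    apply (rule i1, simp)
    done
  have "(\<integral>t. \<phi> t \<partial>F) = (\<integral>t. (\<Sum>j\<in>{0..N}. indicator (A j) t * \<phi> t) \<partial>F)"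
  proof (rule integral_cong_AE)
    show "(\<lambda>t. \<Sum>j\<in>{0..N}. indicator (A j) t * \<phi> t) \<in> borel_measurable F"
      by (subst meq, intro borel_measurable_sum borel_measurable_times borel_measurable_indicator phi_meas) (auto intro: Ameas)
    show "AE t in F. \<phi> t = (\<Sum>j\<in>{0..N}. indicator (A j) t * \<phi> t)"
      using AEpos
    proof eventually_elim
      case (elim t)
      have "(\<Sum>j\<in>{0..N}. indicator (A j) t * \<phi> t) = (\<Sum>j\<in>{0..N}. indicator (A j) t) * \<phi> t"
        by (simp add: sum_distrib_right)
      also have "(\<Sum>j\<in>{0..N}. indicator (A j) t) = (indicator (\<Union>j\<in>{0..N}. A j) t :: real)"
        by (rule indicator_UN_disjoint[symmetric]) (auto intro: A_disj)
      finally have "(\<Sum>j\<in>{0..N}. indicator (A j) t * \<phi> t) = indicator (\<Union>j\<in>{0..N}. A j) t * \<phi> t" .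
      then have "(\<Sum>j\<in>{0..N}. indicator (A j) t * \<phi> t) = indicator {0<..} t * \<phi> t"
        by (simp only: A_cover)
      then show ?case using elim by simp
    qed
  qed simp
  also have "\<dots> = (\<Sum>j\<in>{0..N}. \<integral>t. indicator (A j) t * \<phi> t \<partial>F)"
    using i0 by (intro Bochner_Integration.integral_sum) auto
  also have "\<dots> = (\<integral>t. indicator (A 0) t * \<phi> t \<partial>F) + (\<Sum>j\<in>{1..N}. \<integral>t. indicator (A j) t * \<phi> t \<partial>F)"
    by (simp add: sum.atLeast_Suc_atMost)
  also have "(\<Sum>j\<in>{1..N}. \<integral>t. indicator (A j) t * \<phi> t \<partial>F)
      = (\<Sum>j\<in>{1..N}. (\<integral>t. indicator (A j) t * (\<phi> t - c j) \<partial>F) + measure F (A j) * c j)"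
  proof (rule sum.cong[OF refl])
    fix j assume j: "j \<in> {1..N}"
    have ic: "integrable F (\<lambda>t. indicator (A j) t * c j)"
      using j by (intro int_ind[of "A j" "\<lambda>_. c j" "\<bar>c j\<bar>"]) (auto intro: A_meas)
    have "(\<integral>t. indicator (A j) t * \<phi> t \<partial>F) = (\<integral>t. indicator (A j) t * (\<phi> t - c j) + indicator (A j) t * c j \<partial>F)"
      by (simp add: algebra_simps)
    also have "\<dots> = (\<integral>t. indicator (A j) t * (\<phi> t - c j) \<partial>F) + (\<integral>t. indicator (A j) t * c j \<partial>F)"
      using i2 j ic by (intro Bochner_Integration.integral_add) auto
    also have "(\<integral>t. indicator (A j) t * c j \<partial>F) = measure F (A j) * c j"
      using j A_meas F_sets by simp
    finally show "(\<integral>t. indicator (A j) t * \<phi> t \<partial>F) = (\<integral>t. indicator (A j) t * (\<phi> t - c j) \<partial>F) + measure F (A j) * c j" .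
  qed
  finally have calc: "(\<integral>t. \<phi> t \<partial>F) = (\<integral>t. indicator (A 0) t * \<phi> t \<partial>F) + (\<Sum>j\<in>{1..N}. (\<integral>t. indicator (A j) t * (\<phi> t - c j) \<partial>F) + measure F (A j) * c j)" .
  have s1: "(\<Sum>j\<in>{1..N}. (\<integral>t. indicator (A j) t * (\<phi> t - c j) \<partial>F) + measure F (A j) * c j)
     = (\<Sum>j\<in>{1..N}. (\<integral>t. indicator (A j) t * (\<phi> t - c j) \<partial>F)) + (\<Sum>j\<in>{1..N}. measure F (A j) * c j)"
    by (rule sum.distrib)
  have s2: "(\<Sum>j\<in>{1..N}. (measure F (A j) - w j) * c j) = (\<Sum>j\<in>{1..N}. measure F (A j) * c j) - (\<Sum>j\<in>{1..N}. w j * c j)"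
    by (simp add: left_diff_distrib sum_subtractf)
  have dec: "(\<integral>t. \<phi> t \<partial>F) - (\<Sum>j\<in>{1..N}. w j * c j)
     = (\<integral>t. indicator (A 0) t * \<phi> t \<partial>F) + (\<Sum>j\<in>{1..N}. (\<integral>t. indicator (A j) t * (\<phi> t - c j) \<partial>F))
       + (\<Sum>j\<in>{1..N}. (measure F (A j) - w j) * c j)"
    using calc s1 s2 by linarith
  have I0nn: "(\<integral>t. indicator (A 0) t * \<phi> t \<partial>F) \<ge> 0"
    using phi_nn by (intro integral_nonneg_AE) auto
  have IPhi: "(\<integral>t. \<Phi> t \<partial>F) = (\<integral>t. indicator (A 0) t * \<phi> t \<partial>F) + (\<Sum>j\<in>{1..N}. (\<integral>t. indicator (A j) t * \<bar>\<phi> t - c j\<bar> \<partial>F))"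
    unfolding \<Phi>_def using i0 i1
    apply (subst Bochner_Integration.integral_add)
      apply (rule i0, simp)
     apply (rule Bochner_Integration.integrable_sum, rule i1, simp)
    apply (subst Bochner_Integration.integral_sum)
     apply (rule i1, simp)
    apply (rule refl)
    done
  have absb: "\<bar>\<integral>t. indicator (A j) t * (\<phi> t - c j) \<partial>F\<bar> \<le> (\<integral>t. indicator (A j) t * \<bar>\<phi> t - c j\<bar> \<partial>F)"
    if "j \<in> {1..N}" for j
  proof -
    have "\<bar>\<integral>t. indicator (A j) t * (\<phi> t - c j) \<partial>F\<bar> \<le> (\<integral>t. \<bar>indicator (A j) t * (\<phi> t - c j)\<bar> \<partial>F)"
      by (rule integral_abs_bound)
    also have "\<dots> = (\<integral>t. indicator (A j) t * \<bar>\<phi> t - c j\<bar> \<partial>F)"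
      by (simp add: abs_mult)
    finally show ?thesis .
  qed
  have "\<bar>(\<integral>t. \<phi> t \<partial>F) - (\<Sum>j\<in>{1..N}. w j * c j)\<bar>
     \<le> \<bar>\<integral>t. indicator (A 0) t * \<phi> t \<partial>F\<bar> + \<bar>\<Sum>j\<in>{1..N}. (\<integral>t. indicator (A j) t * (\<phi> t - c j) \<partial>F)\<bar>
       + \<bar>\<Sum>j\<in>{1..N}. (measure F (A j) - w j) * c j\<bar>"
    unfolding dec by (rule order.trans[OF abs_triangle_ineq add_right_mono[OF abs_triangle_ineq]])
  also have "\<dots> \<le> (\<integral>t. indicator (A 0) t * \<phi> t \<partial>F) + (\<Sum>j\<in>{1..N}. (\<integral>t. indicator (A j) t * \<bar>\<phi> t - c j\<bar> \<partial>F))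
       + (\<Sum>j\<in>{1..N}. \<bar>measure F (A j) - w j\<bar> * c j)"
  proof (intro add_mono)
    show "\<bar>\<integral>t. indicator (A 0) t * \<phi> t \<partial>F\<bar> \<le> (\<integral>t. indicator (A 0) t * \<phi> t \<partial>F)" using I0nn by simp
    show "\<bar>\<Sum>j\<in>{1..N}. (\<integral>t. indicator (A j) t * (\<phi> t - c j) \<partial>F)\<bar> \<le> (\<Sum>j\<in>{1..N}. (\<integral>t. indicator (A j) t * \<bar>\<phi> t - c j\<bar> \<partial>F))"
      by (rule order.trans[OF sum_abs sum_mono[OF absb]])
    show "\<bar>\<Sum>j\<in>{1..N}. (measure F (A j) - w j) * c j\<bar> \<le> (\<Sum>j\<in>{1..N}. \<bar>measure F (A j) - w j\<bar> * c j)"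
      by (rule order.trans[OF sum_abs], rule sum_mono) (simp add: abs_mult c_nn)
  qed
  finally show "\<bar>(\<integral>t. \<phi> t \<partial>F) - (\<Sum>j\<in>{1..N}. w j * c j)\<bar>
         \<le> (\<integral>t. \<Phi> t \<partial>F) + (\<Sum>j\<in>{1..N}. \<bar>measure F (A j) - w j\<bar> * c j)"
    unfolding IPhi .
qed



lemma fz_bound:
  assumes th: "\<theta> > 0" and x: "x > 0" and y: "y > 0" and t: "t > 0"
  shows "fz \<theta> t x y \<le> 2 * \<theta> / (x + \<theta> * y)\<^sup>2"
proof -
  define s where "s = x + \<theta> * y"
  have "\<theta> * y > 0" using th y by simp
  hence s: "s > 0" using x by (simp add: s_def)
  have ts: "t * s > 0" using s t by simp
  have "1 + t * s + (t * s)\<^sup>2 / 2 \<le> exp (t * s)" by (rule exp_lower_Taylor_quadratic) (use ts in simp)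
  hence e: "(t * s)\<^sup>2 / 2 \<le> exp (t * s)" using ts by linarith
  have "fz \<theta> t x y = t\<^sup>2 * \<theta> * exp (-(t * s))"
    by (simp add: fz_def s_def)
  also have "\<dots> = t\<^sup>2 * \<theta> / exp (t * s)"
    by (simp add: exp_minus divide_inverse)
  also have "\<dots> \<le> t\<^sup>2 * \<theta> / ((t * s)\<^sup>2 / 2)"
  proof (rule divide_left_mono)
    show "(t * s)\<^sup>2 / 2 \<le> exp (t * s)" by (rule e)
    show "0 \<le> t\<^sup>2 * \<theta>" using th by simp
    have "(t * s)\<^sup>2 > 0" using t s by simp
    then show "0 < exp (t * s) * ((t * s)\<^sup>2 / 2)" by simp
  qed
  also have "\<dots> = 2 * \<theta> / s\<^sup>2"
    using t s by (simp add: field_simps power2_eq_square)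
  finally show ?thesis by (simp add: s_def)
qed

lemma ratio_bound:
  fixes S :: "real set"
  assumes tS: "t \<in> S" and uS: "u \<in> S" and m: "Inf S > 0" and Spos: "S \<subseteq> {0<..}"
  shows "ennreal (4 * \<bar>t - u\<bar> / t) \<le> 4 * (diam_ext S / ennreal (Inf S))"
proof -
  have bdd: "bdd_below S" by (rule bdd_belowI[of _ 0]) (use Spos in force)
  have mt: "Inf S \<le> t" using tS bdd by (rule cInf_lower)
  have tpos: "t > 0" using m mt by linarith
  have d: "ennreal \<bar>t - u\<bar> \<le> diam_ext S"
    unfolding diam_ext_def
    by (rule SUP_upper2[OF tS], rule SUP_upper2[OF uS]) simp
  show ?thesis
  proof (cases "diam_ext S" rule: ennreal_cases)
    case (real r)
    then have r: "\<bar>t - u\<bar> \<le> r" using d by (simp add: ennreal_le_iff)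
    have "4 * \<bar>t - u\<bar> / t \<le> 4 * (r / Inf S)"
    proof -
      have "\<bar>t - u\<bar> / t \<le> r / t" using r tpos by (simp add: divide_right_mono)
      also have "\<dots> \<le> r / Inf S" using real m mt by (intro divide_left_mono) auto
      finally show ?thesis by simp
    qed
    hence "ennreal (4 * \<bar>t - u\<bar> / t) \<le> ennreal (4 * (r / Inf S))" by (rule ennreal_leI)
    also have "\<dots> = 4 * (diam_ext S / ennreal (Inf S))"
    proof -
      have "ennreal (4 * (r / Inf S)) = ennreal 4 * ennreal (r / Inf S)"
        by (rule ennreal_mult) (use real m in auto)
      also have "ennreal (r / Inf S) = ennreal r / ennreal (Inf S)"
        using real m by (simp add: divide_ennreal)
      finally show ?thesis using real by simp
    qed
    finally show ?thesis .
  next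
    case top
    then show ?thesis using m by (simp add: ennreal_top_divide)
  qed
qed

lemma disc_int:
  fixes w z :: "nat \<Rightarrow> real" and f :: "real \<Rightarrow> real"
  assumes w_nonneg: "\<And>j. j \<in> {1..N} \<Longrightarrow> w j \<ge> 0"
  shows "(\<integral>t. f t \<partial>discrete_mix N w z) = (\<Sum>j\<in>{1..N}. w j * f (z j))"
proof -
  define g where "g t = (\<Sum>j\<in>{1..N}. if z j = t then w j else 0)" for t
  have gnn: "g t \<ge> 0" for t unfolding g_def using w_nonneg by (intro sum_nonneg) auto
  have "(\<integral>t. f t \<partial>discrete_mix N w z) = (\<integral>t. f t \<partial>density (count_space UNIV) g)"
    by (simp add: discrete_mix_def g_def)
  also have "\<dots> = (\<integral>t. g t *\<^sub>R f t \<partial>count_space UNIV)"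
    using gnn by (intro integral_density) auto
  also have "\<dots> = (\<integral>t. (\<Sum>j\<in>{1..N}. indicator {z j} t * (w j * f (z j))) \<partial>count_space UNIV)"
  proof (intro Bochner_Integration.integral_cong refl)
    fix t
    show "g t *\<^sub>R f t = (\<Sum>j\<in>{1..N}. indicator {z j} t * (w j * f (z j)))"
      unfolding g_def real_scaleR_def sum_distrib_right by (intro sum.cong refl) (auto simp: indicator_def)
  qed
  also have "\<dots> = (\<Sum>j\<in>{1..N}. \<integral>t. indicator {z j} t * (w j * f (z j)) \<partial>count_space UNIV)"
    by (intro Bochner_Integration.integral_sum integrable_real_mult_indicator) auto
  also have "\<dots> = (\<Sum>j\<in>{1..N}. w j * f (z j))"
    by (simp add: measure_count_space)
  finally show ?thesis .
qed



theorem mainTheorem5: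
  fixes \<theta>0 :: real and F :: "real measure" and N :: nat
    and A :: "nat \<Rightarrow> real set" and w z :: "nat \<Rightarrow> real"
  assumes theta_pos: "\<theta>0 > 0"
    and F_prob: "prob_space F" and F_sets: "sets F = sets borel"
    and F_pos: "measure F {0<..} = 1"
    and A_meas: "\<And>j. j \<le> N \<Longrightarrow> A j \<in> sets borel"
    and A_disj: "disjoint_family_on A {0..N}"
    and A_cover: "(\<Union>j\<in>{0..N}. A j) = {0<..}"
    and m_pos: "\<And>j. j \<in> {1..N} \<Longrightarrow> Inf (A j) > 0"
    and w_nonneg: "\<And>j. j \<in> {1..N} \<Longrightarrow> w j \<ge> 0"
    and w_sum: "(\<Sum>j\<in>{1..N}. w j) = 1"
    and z_in: "\<And>j. j \<in> {1..N} \<Longrightarrow> z j \<in> A j"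
  shows "L1_dist (pmix \<theta>0 F) (pmix \<theta>0 (discrete_mix N w z))
         \<le> 4 * (MAX j\<in>{1..N}. diam_ext (A j) / ennreal (Inf (A j)))
           + ennreal (\<Sum>j\<in>{1..N}. \<bar>measure F (A j) - w j\<bar>)
           + ennreal (measure F (A 0))"
proof -
  interpret P: prob_space F by (rule F_prob)
  interpret FL: pair_sigma_finite F "lborel :: (real \<times> real) measure"
    by (rule pair_sigma_finite.intro[OF P.sigma_finite_measure_axioms sigma_finite_lborel])
  define S :: "(real \<times> real) set" where "S = {0<..} \<times> {0<..}"
  define M where "M = (MAX j\<in>{1..N}. diam_ext (A j) / ennreal (Inf (A j)))"
  define f where "f t q = fz \<theta>0 t (fst q) (snd q)" for t and q :: "real \<times> real"
  define \<Phi> where "\<Phi> q t = indicator (A 0) t * f t q + (\<Sum>j\<in>{1..N}. indicator (A j) t * \<bar>f t q - f (z j) q\<bar>)"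
    for q :: "real \<times> real" and t
  have Asub: "A j \<subseteq> {0<..}" if "j \<le> N" for j
    using A_cover that by auto
  have zpos: "z j > 0" if "j \<in> {1..N}" for j
    using z_in[OF that] Asub[of j] that by auto
  have fnn: "f t q \<ge> 0" for t q
    using theta_pos by (simp add: f_def fz_def)
  have Phinn: "\<Phi> q t \<ge> 0" for q t
    unfolding \<Phi>_def using fnn by (intro add_nonneg_nonneg sum_nonneg) auto
  have disj: "A j \<inter> A k = {}" if "j \<le> N" "k \<le> N" "j \<noteq> k" for j k
    using A_disj that unfolding disjoint_family_on_def by auto

  have step1: "ennreal \<bar>pmix \<theta>0 F (fst q) (snd q) - pmix \<theta>0 (discrete_mix N w z) (fst q) (snd q)\<bar>
      \<le> (\<integral>\<^sup>+t. ennreal (\<Phi> q t) \<partial>F) + (\<Sum>j\<in>{1..N}. ennreal \<bar>measure F (A j) - w j\<bar> * ennreal (f (z j) q))"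
    if q: "q \<in> S" for q
  proof -
    obtain x y where qxy: "q = (x, y)" by (cases q)
    have x: "x > 0" and y: "y > 0" using q by (auto simp: S_def qxy)
    have phim: "(\<lambda>t. fz \<theta>0 t x y) \<in> borel_measurable borel"
      unfolding fz_def by measurable
    note PWa = pointwise(1)[OF F_prob F_sets F_pos A_meas A_disj A_cover phim, where B="2 * \<theta>0 / (x + \<theta>0 * y)\<^sup>2" and c="\<lambda>j. fz \<theta>0 (z j) x y"]
    note PWb = pointwise(2)[OF F_prob F_sets F_pos A_meas A_disj A_cover phim, where B="2 * \<theta>0 / (x + \<theta>0 * y)\<^sup>2" and c="\<lambda>j. fz \<theta>0 (z j) x y" and w=w]
    have PhiEq: "\<Phi> q = (\<lambda>t. indicator (A 0) t * fz \<theta>0 t x y + (\<Sum>j\<in>{1..N}. indicator (A j) t * \<bar>fz \<theta>0 t x y - fz \<theta>0 (z j) x y\<bar>))"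
      by (simp add: \<Phi>_def f_def qxy fun_eq_iff)
    have PW1: "integrable F (\<Phi> q)"
      unfolding PhiEq using fz_bound[OF theta_pos x y] fnn by (intro PWa) (auto simp: f_def)
    have PW2: "\<bar>(\<integral>t. fz \<theta>0 t x y \<partial>F) - (\<Sum>j\<in>{1..N}. w j * fz \<theta>0 (z j) x y)\<bar>
         \<le> (\<integral>t. \<Phi> q t \<partial>F) + (\<Sum>j\<in>{1..N}. \<bar>measure F (A j) - w j\<bar> * fz \<theta>0 (z j) x y)"
      unfolding PhiEq using fz_bound[OF theta_pos x y] fnn by (intro PWb) (auto simp: f_def)
    have pF: "pmix \<theta>0 F x y = (\<integral>t. fz \<theta>0 t x y \<partial>F)"
      by (simp add: pmix_def fz_def)
    have pN: "pmix \<theta>0 (discrete_mix N w z) x y = (\<Sum>j\<in>{1..N}. w j * fz \<theta>0 (z j) x y)"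
      unfolding pmix_def using disc_int[OF w_nonneg, where z=z and f="\<lambda>t. fz \<theta>0 t x y"]
      by (simp add: fz_def)
    have "ennreal \<bar>pmix \<theta>0 F x y - pmix \<theta>0 (discrete_mix N w z) x y\<bar>
        \<le> ennreal ((\<integral>t. \<Phi> q t \<partial>F) + (\<Sum>j\<in>{1..N}. \<bar>measure F (A j) - w j\<bar> * fz \<theta>0 (z j) x y))"
      using PW2 pF pN by (intro ennreal_leI) simp
    also have "\<dots> = ennreal (\<integral>t. \<Phi> q t \<partial>F) + ennreal (\<Sum>j\<in>{1..N}. \<bar>measure F (A j) - w j\<bar> * fz \<theta>0 (z j) x y)"
      using Phinn fnn by (intro ennreal_plus integral_nonneg_AE sum_nonneg mult_nonneg_nonneg) (auto simp: f_def)
    also have "ennreal (\<integral>t. \<Phi> q t \<partial>F) = (\<integral>\<^sup>+t. ennreal (\<Phi> q t) \<partial>F)"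
      using PW1 Phinn by (intro nn_integral_eq_integral[symmetric]) auto
    also have "ennreal (\<Sum>j\<in>{1..N}. \<bar>measure F (A j) - w j\<bar> * fz \<theta>0 (z j) x y)
       = (\<Sum>j\<in>{1..N}. ennreal \<bar>measure F (A j) - w j\<bar> * ennreal (f (z j) q))"
      using fnn by (subst sum_ennreal[symmetric]) (auto simp: f_def qxy ennreal_mult)
    finally show ?thesis by (simp add: qxy)
  qed

  have Hmeas: "(\<lambda>p. indicator S (snd p) * ennreal (\<Phi> (snd p) (fst p))) \<in> borel_measurable (F \<Otimes>\<^sub>M lborel)"
  proof -
    have mterm: "(\<lambda>p::real\<times>(real\<times>real). indicator (A j) (fst p) * \<bar>f (fst p) (snd p) - f (z j) (snd p)\<bar>) \<in> borel_measurable (borel \<Otimes>\<^sub>M (lborel \<Otimes>\<^sub>M lborel))"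
      if "j \<le> N" for j
    proof -
      note A_meas[OF that, measurable]
      show ?thesis unfolding f_def fz_def by measurable
    qed
    have m0: "(\<lambda>p::real\<times>(real\<times>real). indicator (A 0) (fst p) * f (fst p) (snd p)) \<in> borel_measurable (borel \<Otimes>\<^sub>M (lborel \<Otimes>\<^sub>M lborel))"
    proof -
      note A_meas[of 0, simplified, measurable]
      show ?thesis unfolding f_def fz_def by measurable
    qed
    have mPhi: "(\<lambda>p::real\<times>(real\<times>real). \<Phi> (snd p) (fst p)) \<in> borel_measurable (borel \<Otimes>\<^sub>M (lborel \<Otimes>\<^sub>M lborel))"
      unfolding \<Phi>_def by (intro borel_measurable_add borel_measurable_sum m0 mterm) auto
    note mPhi[measurable]
    have "(\<lambda>p::real\<times>(real\<times>real). indicator S (snd p) * ennreal (\<Phi> (snd p) (fst p))) \<in> borel_measurable (borel \<Otimes>\<^sub>M (lborel \<Otimes>\<^sub>M lborel))"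
      unfolding S_def by measurable
    moreover have "sets (F \<Otimes>\<^sub>M (lborel :: (real\<times>real) measure)) = sets (borel \<Otimes>\<^sub>M (lborel \<Otimes>\<^sub>M lborel))"
      by (rule sets_pair_measure_cong[OF F_sets]) (simp only: lborel_prod)
    ultimately show ?thesis using measurable_cong_sets by blast
  qed
  have Hmeas': "(\<lambda>(q, t). indicator S q * ennreal (\<Phi> q t)) \<in> borel_measurable ((lborel :: (real\<times>real) measure) \<Otimes>\<^sub>M F)"
    using measurable_pair_swap[OF Hmeas] by (simp add: case_prod_unfold)
  have Gmeas: "(\<lambda>q. \<integral>\<^sup>+t. indicator S q * ennreal (\<Phi> q t) \<partial>F) \<in> borel_measurable (lborel :: (real\<times>real) measure)"
    using P.borel_measurable_nn_integral[OF Hmeas'] by simp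
  have mfj: "(\<lambda>q. indicator S q * ennreal (f (z j) q)) \<in> borel_measurable (lborel :: (real\<times>real) measure)" for j
    unfolding lborel_prod[symmetric] S_def f_def fz_def by measurable
  have fj_int: "(\<integral>\<^sup>+q. indicator S q * ennreal (f (z j) q) \<partial>lborel) = 1" if "j \<in> {1..N}" for j
    using fz_int[OF theta_pos zpos[OF that]] by (simp add: S_def f_def)

  have inner: "(\<integral>\<^sup>+q. indicator S q * ennreal (\<Phi> q t) \<partial>lborel) \<le> indicator (A 0) t + 4 * M" for t
  proof -
    consider (a) "t \<in> A 0" | (b) j where "j \<in> {1..N}" "t \<in> A j" | (c) "\<And>j. j \<in> {0..N} \<Longrightarrow> t \<notin> A j"
    proof -
      have jc: "\<And>j. j \<in> {0..N} \<Longrightarrow> j = 0 \<or> j \<in> {1..N}" by auto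
      show ?thesis using that jc by blast
    qed
    then show ?thesis
    proof cases
      case a
      have notj: "t \<notin> A k" if "k \<in> {1..N}" for k using disj[of 0 k] a that by auto
      have tpos: "t > 0" using Asub[of 0] a by auto
      have "\<Phi> q t = f t q" for q
        unfolding \<Phi>_def using a notj by simp
      then have "(\<integral>\<^sup>+q. indicator S q * ennreal (\<Phi> q t) \<partial>lborel) = 1"
        using fz_int[OF theta_pos tpos] by (simp add: S_def f_def)
      then show ?thesis using a by simp
    next
      case (b j)
      have notk: "t \<notin> A k" if "k \<le> N" "k \<noteq> j" for k using disj[of j k] b that by auto
      have tpos: "t > 0" using Asub[of j] b by auto
      have "\<Phi> q t = \<bar>f t q - f (z j) q\<bar>" for q
      proof -
        have "(\<Sum>k\<in>{1..N}. indicator (A k) t * \<bar>f t q - f (z k) q\<bar>) = (\<Sum>k\<in>{1..N}. if k = j then \<bar>f t q - f (z k) q\<bar> else 0)"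
          using notk by (intro sum.cong refl) (auto simp: b)
        also have "\<dots> = \<bar>f t q - f (z j) q\<bar>" using b by simp
        finally show ?thesis unfolding \<Phi>_def using notk[of 0] b by simp
      qed
      then have "(\<integral>\<^sup>+q. indicator S q * ennreal (\<Phi> q t) \<partial>lborel) \<le> ennreal (4 * \<bar>t - z j\<bar> / t)"
        using fz_diff_int[OF theta_pos tpos zpos[OF b(1)]] by (simp add: S_def f_def)
      also have "\<dots> \<le> 4 * (diam_ext (A j) / ennreal (Inf (A j)))"
        using b by (intro ratio_bound z_in m_pos Asub) auto
      also have "\<dots> \<le> 4 * M"
        unfolding M_def using b by (intro mult_left_mono Max_ge) auto
      also have "\<dots> \<le> indicator (A 0) t + 4 * M" by simp
      finally show ?thesis .
    next
      case c
      have "\<Phi> q t = 0" for q unfolding \<Phi>_def using c by simp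
      then show ?thesis by simp
    qed
  qed

  have "L1_dist (pmix \<theta>0 F) (pmix \<theta>0 (discrete_mix N w z))
      = (\<integral>\<^sup>+q. indicator S q * ennreal \<bar>pmix \<theta>0 F (fst q) (snd q) - pmix \<theta>0 (discrete_mix N w z) (fst q) (snd q)\<bar> \<partial>lborel)"
    by (simp add: L1_dist_def S_def)
  also have "\<dots> \<le> (\<integral>\<^sup>+q. (\<integral>\<^sup>+t. indicator S q * ennreal (\<Phi> q t) \<partial>F)
        + (\<Sum>j\<in>{1..N}. ennreal \<bar>measure F (A j) - w j\<bar> * (indicator S q * ennreal (f (z j) q))) \<partial>lborel)"
  proof (rule nn_integral_mono)
    fix q :: "real \<times> real"
    show "indicator S q * ennreal \<bar>pmix \<theta>0 F (fst q) (snd q) - pmix \<theta>0 (discrete_mix N w z) (fst q) (snd q)\<bar>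
      \<le> (\<integral>\<^sup>+t. indicator S q * ennreal (\<Phi> q t) \<partial>F)
        + (\<Sum>j\<in>{1..N}. ennreal \<bar>measure F (A j) - w j\<bar> * (indicator S q * ennreal (f (z j) q)))"
    proof (cases "q \<in> S")
      case True
      then show ?thesis using step1[OF True] by simp
    next
      case False
      then show ?thesis by simp
    qed
  qed
  also have "\<dots> = (\<integral>\<^sup>+q. \<integral>\<^sup>+t. indicator S q * ennreal (\<Phi> q t) \<partial>F \<partial>lborel)
        + (\<Sum>j\<in>{1..N}. ennreal \<bar>measure F (A j) - w j\<bar> * (\<integral>\<^sup>+q. indicator S q * ennreal (f (z j) q) \<partial>lborel))"
    using Gmeas mfj
    by (subst nn_integral_add) (auto intro!: borel_measurable_sum simp: nn_integral_sum nn_integral_cmult)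
  also have "(\<Sum>j\<in>{1..N}. ennreal \<bar>measure F (A j) - w j\<bar> * (\<integral>\<^sup>+q. indicator S q * ennreal (f (z j) q) \<partial>lborel))
      = ennreal (\<Sum>j\<in>{1..N}. \<bar>measure F (A j) - w j\<bar>)"
    using fj_int by simp
  also have "(\<integral>\<^sup>+q. \<integral>\<^sup>+t. indicator S q * ennreal (\<Phi> q t) \<partial>F \<partial>lborel)
      = (\<integral>\<^sup>+t. \<integral>\<^sup>+q. indicator S q * ennreal (\<Phi> q t) \<partial>lborel \<partial>F)"
    using FL.Fubini[OF Hmeas] by simp
  also have "\<dots> \<le> (\<integral>\<^sup>+t. indicator (A 0) t + 4 * M \<partial>F)"
    by (intro nn_integral_mono inner)
  also have "\<dots> = emeasure F (A 0) + 4 * M"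
  proof -
    have A0F: "A 0 \<in> sets F" using A_meas[of 0] F_sets by simp
    then show ?thesis
      by (subst nn_integral_add) (auto simp: P.emeasure_space_1)
  qed
  finally show ?thesis
    by (simp add: M_def P.emeasure_eq_measure add_ac)
qed

end
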